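(* Let $B_n$ be the closed Euclidean unit ball in $\mathbf{R}^n$ and $S^{n-1} = \partial B_n$. Let $\mathcal{E}$ be an ellipsoid such that $\mathcal{E} \subset B_n$. Then $\mathcal{E} \cap S^{n-1}$ is a subsphere.
   Context: An ellipsoid is a subset of $\mathbf{R}^n$ of the form $\Theta(B_n)$ where $\Theta : \mathbf{R}^n \to \mathbf{R}^n$ is an affine map (possibly non-injective). A subset $A \subset S^{n-1}$ is a subsphere if $A = S^{n-1} \cap \mathrm{aff}(A)$, where $\mathrm{aff}(A)$ is the affine subspace generated by $A$ (so the empty set is a subsphere). *)

theory Defs
  imports "HOL-Analysis.Analysis"
begin

text \<open>An ellipsoid in R^n: the image of the closed unit ball under an affine map
  x \<mapsto> L x + c, with L linear (possibly non-injective).\<close>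
definition ellipsoid :: "(real ^ 'n) set \<Rightarrow> bool" where
  "ellipsoid E \<longleftrightarrow> (\<exists>(L :: real ^ 'n \<Rightarrow> real ^ 'n) c. linear L \<and> E = (\<lambda>x. L x + c) ` cball 0 1)"

definition subsphere :: "(real ^ 'n) set \<Rightarrow> bool" where
  "subsphere A \<longleftrightarrow> A \<subseteq> sphere 0 1 \<and> A = sphere 0 1 \<inter> affine hull A"

end

theory Submission
  imports Defs
begin

lemma quad_zero:
  fixes b g :: real
  assumes h: "\<And>s. 2 * s * b + s^2 * g \<le> 0" and g: "g \<le> 0"
  shows "b = 0"
proof (rule ccontr)
  assume nz: "b \<noteq> 0"
  define G where "G = \<bar>g\<bar> + 1"
  define s where "s = b / G"
  have pos: "G > 0" unfolding G_def by simp
  have "2 * s * b + s^2 * g = b^2 * (2*G + g) / G^2"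
    unfolding s_def using pos by (simp add: field_simps power2_eq_square)
  also have "\<dots> > 0" using nz g pos unfolding G_def by (intro divide_pos_pos mult_pos_pos) auto
  finally show False using h[of s] by simp
qed

lemma lim_zero:
  fixes a b g :: real
  assumes h: "\<And>e. e > 0 \<Longrightarrow> a + b*e + g*e^2 \<le> 0"
  shows "a \<le> 0"
proof (rule ccontr)
  assume "\<not> a \<le> 0"
  hence a: "a > 0" by simp
  define M where "M = \<bar>b\<bar> + \<bar>g\<bar> + 1"
  have M: "M > 0" "M \<ge> \<bar>b\<bar> + \<bar>g\<bar>" unfolding M_def by auto
  define e where "e = min 1 (a / (2*M))"
  have e: "e > 0" "e \<le> 1" "e \<le> a/(2*M)" using a M unfolding e_def by auto
  have "e^2 \<le> e" using e by (simp add: power2_eq_square mult_le_cancel_left1)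
  have "\<bar>b*e + g*e^2\<bar> \<le> \<bar>b\<bar>*e + \<bar>g\<bar>*e^2"
    using e by (simp add: abs_mult abs_triangle_ineq order_trans[OF abs_triangle_ineq])
  also have "\<dots> \<le> \<bar>b\<bar>*e + \<bar>g\<bar>*e"
    using \<open>e^2 \<le> e\<close> by (simp add: mult_left_mono)
  also have "\<dots> \<le> M * e" using mult_right_mono[OF M(2), of e] e by (simp add: algebra_simps)
  also have "\<dots> \<le> M * (a/(2*M))" using M e by (intro mult_left_mono) auto
  also have "\<dots> = a/2" using M by simp
  finally have "a + b*e + g*e^2 > 0" using a by linarith
  with h[OF e(1)] show False by simp
qed


theorem lemma5:
  fixes E :: "(real ^ 'n) set"
  assumes "ellipsoid E" and "E \<subseteq> cball 0 1"
  shows "subsphere (E \<inter> sphere 0 1)"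
proof -
  obtain L :: "real ^ 'n \<Rightarrow> real ^ 'n" and c where lin: "linear L"
    and Edef: "E = (\<lambda>x. L x + c) ` cball 0 1"
    using assms(1) unfolding ellipsoid_def by blast
  have Lin: "\<And>x y. L (x + y) = L x + L y" "\<And>x y. L (x - y) = L x - L y"
    "\<And>r x. L (r *\<^sub>R x) = r *\<^sub>R L x"
    using lin by (auto simp: linear_add linear_diff linear_scale)
  have inB: "\<And>w. norm w \<le> 1 \<Longrightarrow> norm (L w + c) \<le> 1"
    using assms(2) Edef by (force simp: subset_iff)
  define A where "A = E \<inter> sphere 0 (1::real)"
  have "sphere 0 1 \<inter> affine hull A \<subseteq> A"
  proof (cases "A = {}")
    case True then show ?thesis by simp
  next
    case False
    then obtain a0 where a0A: "a0 \<in> A" by blast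
    then obtain w0 where w0: "norm w0 \<le> 1" and a0: "a0 = L w0 + c" and na0: "norm a0 = 1"
      unfolding A_def Edef by auto
    define v where "v = adjoint L a0"
    have adj: "\<And>x. a0 \<bullet> L x = v \<bullet> x"
      unfolding v_def using adjoint_works[OF lin] by (simp add: inner_commute)
    have aa: "a0 \<bullet> a0 = 1" using na0 by (simp add: dot_square_norm)
    have supp: "v \<bullet> w \<le> 1 - a0 \<bullet> c" if "norm w \<le> 1" for w
    proof -
      have "a0 \<bullet> (L w + c) \<le> norm a0 * norm (L w + c)" by (rule Cauchy_Schwarz_ineq2[THEN order_trans[OF abs_ge_self]])
      also have "\<dots> \<le> 1" using inB[OF that] na0 by simp
      finally show ?thesis using adj[of w] by (simp add: inner_add_right)
    qed
    have eq0: "v \<bullet> w0 = 1 - a0 \<bullet> c" using aa a0 adj[of w0] by (simp add: inner_add_right)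
    show ?thesis
    proof (cases "v = 0")
      case True
      have single: "L w + c = a0" if "norm w \<le> 1" for w
      proof -
        have d1: "a0 \<bullet> (L w + c) = 1" using True eq0 adj[of w] by (simp add: inner_add_right)
        have "norm (L w + c) \<le> 1" using inB[OF that] .
        hence "(L w + c) \<bullet> (L w + c) \<le> 1"
          by (metis dot_square_norm norm_ge_zero power_le_one)
        hence "(L w + c - a0) \<bullet> (L w + c - a0) \<le> 0"
          using d1 aa by (simp add: inner_diff_left inner_diff_right inner_commute)
        thus ?thesis by (metis eq_iff_diff_eq_0 inner_eq_zero_iff inner_ge_zero order_antisym)
      qed
      have "A \<subseteq> {a0}" unfolding A_def Edef using single by auto
      hence "affine hull A \<subseteq> {a0}" by (metis affine_hull_sing hull_mono)
      then show ?thesis using a0A by auto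
    next
      case False
      define t where "t = norm v"
      have tpos: "t > 0" using False unfolding t_def by simp
      have "v \<bullet> (v /\<^sub>R t) = t" unfolding t_def using False
        by (simp add: dot_square_norm power2_eq_square)
      moreover have "norm (v /\<^sub>R t) \<le> 1" unfolding t_def using False by simp
      ultimately have "t \<le> v \<bullet> w0" using supp eq0 by fastforce
      moreover have "v \<bullet> w0 \<le> t * norm w0" unfolding t_def
        by (metis norm_cauchy_schwarz)
      ultimately have nw0: "norm w0 = 1" using w0 tpos
        by (metis mult_le_cancel_left1 order_antisym order_trans)
      have ww: "w0 \<bullet> w0 = 1" using nw0 by (simp add: dot_square_norm)
      have vw: "v \<bullet> w0 = t" using \<open>t \<le> v \<bullet> w0\<close> \<open>v \<bullet> w0 \<le> t * norm w0\<close> nw0 by simp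
      have ex: "(v - t *\<^sub>R w0) \<bullet> (v - t *\<^sub>R w0) = v \<bullet> v - 2 * t * (v \<bullet> w0) + t * t * (w0 \<bullet> w0)"
        by (simp add: inner_diff_left inner_diff_right inner_commute algebra_simps)
      have "v \<bullet> v = t * t" unfolding t_def by (simp add: dot_square_norm power2_eq_square)
      with ex vw ww have "(v - t *\<^sub>R w0) \<bullet> (v - t *\<^sub>R w0) = 0" by simp
      hence vt: "v = t *\<^sub>R w0" by (metis eq_iff_diff_eq_0 inner_eq_zero_iff)
      have adj2: "\<And>x. a0 \<bullet> L x = t * (w0 \<bullet> x)" using adj vt by simp
      have ac: "a0 \<bullet> c = 1 - t" using eq0 vw by simp
      have key: "(L w + c) \<bullet> (L w + c) = 1 + t * (w \<bullet> w - 1) - t * ((w - w0) \<bullet> (w - w0))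
                 + L (w - w0) \<bullet> L (w - w0)" for w
      proof -
        have e1: "L w + c = a0 + L (w - w0)" using a0 Lin by simp
        have "(L w + c) \<bullet> (L w + c) = 1 + 2 * t * (w0 \<bullet> (w - w0)) + L (w - w0) \<bullet> L (w - w0)"
          unfolding e1 using aa adj2[of "w - w0"]
          by (simp add: inner_add_left inner_add_right inner_commute)
        moreover have "w \<bullet> w = 1 + 2 * (w0 \<bullet> (w - w0)) + (w - w0) \<bullet> (w - w0)"
          using ww by (simp add: inner_diff_left inner_diff_right inner_commute)
        moreover have gen: "\<And>P Q X D W. P = 1 + 2*t*X + Q \<Longrightarrow> W = 1 + 2*X + D \<Longrightarrow> P = 1 + t*(W-1) - t*D + Q"
          by (simp add: algebra_simps)
        ultimately show ?thesis by blast
      qed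
      have le1: "(L w + c) \<bullet> (L w + c) \<le> 1" if "norm w \<le> 1" for w
        using inB[OF that] by (metis dot_square_norm norm_ge_zero power_le_one)
      have psd_neg: "L e \<bullet> L e \<le> t * (e \<bullet> e)" if "w0 \<bullet> e < 0" for e
      proof -
        have en: "e \<bullet> e > 0" using that by (metis inner_zero_right inner_gt_zero_iff less_irrefl)
        define s where "s = - 2 * (w0 \<bullet> e) / (e \<bullet> e)"
        have spos: "s > 0" unfolding s_def using that en by (simp add: divide_neg_pos)
        define w where "w = w0 + s *\<^sub>R e"
        have "w \<bullet> w = 1 + s * (2 * (w0 \<bullet> e) + s * (e \<bullet> e))"
          unfolding w_def using ww by (simp add: inner_add_left inner_add_right inner_commute algebra_simps power2_eq_square)
        also have "2 * (w0 \<bullet> e) + s * (e \<bullet> e) = 0" unfolding s_def using en by simp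
        finally have wn: "w \<bullet> w = 1" by simp
        hence "norm w \<le> 1" by (simp add: norm_eq_sqrt_inner)
        from le1[OF this] key[of w] wn
        have "L (s *\<^sub>R e) \<bullet> L (s *\<^sub>R e) \<le> t * ((s *\<^sub>R e) \<bullet> (s *\<^sub>R e))"
          unfolding w_def by simp
        hence "s^2 * (L e \<bullet> L e) \<le> s^2 * (t * (e \<bullet> e))"
          using Lin by (simp add: power2_eq_square algebra_simps)
        thus ?thesis using spos by simp
      qed
      have psd: "L e \<bullet> L e \<le> t * (e \<bullet> e)" for e
      proof -
        consider "w0 \<bullet> e < 0" | "w0 \<bullet> e > 0" | "w0 \<bullet> e = 0" by linarith
        then show ?thesis
        proof cases
          case 1 then show ?thesis by (rule psd_neg)
        next
          case 2
          have "L (-e) \<bullet> L (-e) \<le> t * ((-e) \<bullet> (-e))" using 2 by (intro psd_neg) simp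
          then show ?thesis using Lin by (simp add: linear_neg[OF lin])
        next
          case 3
          have "(L e \<bullet> L e - t * (e \<bullet> e)) + (- 2 * (L e \<bullet> L w0)) * \<epsilon>
                 + (L w0 \<bullet> L w0 - t) * \<epsilon>^2 \<le> 0" if "\<epsilon> > 0" for \<epsilon>
          proof -
            have "L (e - \<epsilon> *\<^sub>R w0) \<bullet> L (e - \<epsilon> *\<^sub>R w0) \<le> t * ((e - \<epsilon> *\<^sub>R w0) \<bullet> (e - \<epsilon> *\<^sub>R w0))"
              using 3 that ww by (intro psd_neg) (simp add: inner_diff_right)
            thus ?thesis using 3 ww Lin
              by (simp add: inner_diff_left inner_diff_right inner_commute algebra_simps power2_eq_square)
          qed
          from lim_zero[OF this] show ?thesis by simp
        qed
      qed
      define K where "K d \<longleftrightarrow> (\<forall>e. t * (d \<bullet> e) = L d \<bullet> L e)" for d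
      have Kin: "K d" if "L d \<bullet> L d = t * (d \<bullet> d)" for d
        unfolding K_def
      proof
        fix e
        have "2 * s * (L d \<bullet> L e - t * (d \<bullet> e)) + s^2 * (L e \<bullet> L e - t * (e \<bullet> e)) \<le> 0" for s
        proof -
          have "L (d + s *\<^sub>R e) \<bullet> L (d + s *\<^sub>R e) \<le> t * ((d + s *\<^sub>R e) \<bullet> (d + s *\<^sub>R e))"
            by (rule psd)
          thus ?thesis using that Lin
            by (simp add: inner_add_left inner_add_right inner_commute algebra_simps power2_eq_square)
        qed
        from quad_zero[OF this] psd[of e] show "t * (d \<bullet> e) = L d \<bullet> L e" by simp
      qed
      define Z where "Z = {y. \<exists>z. y = L z + c \<and> K (z - w0)}"
      have affZ: "affine Z"
        unfolding affine_def
      proof (intro ballI allI impI)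
        fix x y :: "real ^ 'n" and u r :: real
        assume x: "x \<in> Z" and y: "y \<in> Z" and ur: "u + r = 1"
        obtain z1 where z1: "x = L z1 + c" "K (z1 - w0)" using x unfolding Z_def by blast
        obtain z2 where z2: "y = L z2 + c" "K (z2 - w0)" using y unfolding Z_def by blast
        define z where "z = u *\<^sub>R z1 + r *\<^sub>R z2"
        have "u *\<^sub>R x + r *\<^sub>R y = L z + c"
          unfolding z_def z1 z2 using Lin ur
          by (simp add: algebra_simps) (metis scaleR_add_left scaleR_one)
        moreover have "z - w0 = u *\<^sub>R (z1 - w0) + r *\<^sub>R (z2 - w0)"
          unfolding z_def using ur by (simp add: algebra_simps) (metis scaleR_add_left scaleR_one)
        moreover have "K (u *\<^sub>R (z1 - w0) + r *\<^sub>R (z2 - w0))"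
          unfolding K_def
        proof
          fix e
          have Lsplit: "L (u *\<^sub>R (z1 - w0) + r *\<^sub>R (z2 - w0)) = u *\<^sub>R L (z1 - w0) + r *\<^sub>R L (z2 - w0)"
            using Lin(1,3) by simp
          have e1: "t * ((z1 - w0) \<bullet> e) = L (z1 - w0) \<bullet> L e" "t * ((z2 - w0) \<bullet> e) = L (z2 - w0) \<bullet> L e"
            using z1(2) z2(2) unfolding K_def by blast+
          have gen: "\<And>a b p q. t * a = p \<Longrightarrow> t * b = q \<Longrightarrow> t * (u * a + r * b) = u * p + r * q"
            by (metis distrib_left mult.left_commute)
          show "t * ((u *\<^sub>R (z1 - w0) + r *\<^sub>R (z2 - w0)) \<bullet> e) = L (u *\<^sub>R (z1 - w0) + r *\<^sub>R (z2 - w0)) \<bullet> L e"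
            unfolding Lsplit inner_add_left inner_scaleR_left
            by (rule gen[OF e1])
        qed
        ultimately show "u *\<^sub>R x + r *\<^sub>R y \<in> Z" unfolding Z_def by auto
      qed
      have AZ: "A \<subseteq> Z"
      proof
        fix a assume "a \<in> A"
        then obtain w where w: "norm w \<le> 1" "a = L w + c" "norm a = 1"
          unfolding A_def Edef by auto
        have "(L w + c) \<bullet> (L w + c) = 1" using w by (simp add: dot_square_norm)
        moreover have "w \<bullet> w \<le> 1" using w(1) by (metis dot_square_norm norm_ge_zero power_le_one)
        moreover note psd[of "w - w0"] key[of w]
        ultimately have "L (w - w0) \<bullet> L (w - w0) = t * ((w - w0) \<bullet> (w - w0))"
          using tpos by (smt (verit) mult_le_0_iff)
        then show "a \<in> Z" unfolding Z_def using Kin w by blast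
      qed
      have "affine hull A \<subseteq> Z" using AZ affZ by (simp add: hull_minimal)
      show ?thesis
      proof
        fix y assume y: "y \<in> sphere 0 1 \<inter> affine hull A"
        then obtain z where z: "y = L z + c" "K (z - w0)" using \<open>affine hull A \<subseteq> Z\<close> unfolding Z_def by blast
        have "L (z - w0) \<bullet> L (z - w0) = t * ((z - w0) \<bullet> (z - w0))"
          using z(2) unfolding K_def by metis
        moreover have "y \<bullet> y = 1" using y by (simp add: dot_square_norm)
        ultimately have "t * (z \<bullet> z - 1) = 0" using key[of z] z(1) by simp
        hence "z \<bullet> z = 1" using tpos by simp
        hence "norm z = 1" by (simp add: norm_eq_sqrt_inner)
        then show "y \<in> A" unfolding A_def Edef using y z(1) by auto
      qed
    qed
  qed
  moreover have "A \<subseteq> affine hull A" by (rule hull_subset)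
  ultimately show ?thesis unfolding subsphere_def A_def by auto
qed

end
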